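(* Let $g_1:\mathcal W\to[\epsilon_1,1]$ (for some $\epsilon_1>0$) and $m_1:\mathcal W\to[0,1]$ be measurable functions such that either $g_1=g$ or $m_1=m$ ($P$-almost surely). Define \[ r_1(w)=E_P\big\{Y-m_1(W)\mid A=1,\ g_1(W)=g_1(w)\big\},\qquad e_1(w)=E_P\big\{g_1(W)\mid r_1(W)=r_1(w)\big\}\] (the $e$-score), and let $\lambda_1=(e_1,m_1)$. Then $P D_{\lambda_1,\theta}=E_P\{D_{\lambda_1,\theta}(O)\}=0$.
   Context: Let $O=(W,A,Y)$ be a random vector with distribution $P$, where $W$ takes values in a measurable space $\mathcal W$, $A\in\{0,1\}$, and $Y\in[0,1]$. Let $g(w)=P(A=1\mid W=w)$ (propensity score), $m(w)=E_P(Y\mid A=1,W=w)$ (outcome regression), and $\theta=E_P\{m(W)\}$. Strong positivity is assumed: there is $\epsilon>0$ with $P\{g(W)>\epsilon\}=1$. For a measurable $e:\mathcal W\to(0,1]$ bounded away from $0$ and a measurable $m':\mathcal W\to\mathbb R$, write $\lambda=(e,m')$ and \[ D_{\lambda,\theta}(O)=\frac{A}{e(W)}\{Y-m'(W)\}+m'(W)-\theta .\] For a function $f$ of $O$, $Pf=\int f\,dP$. *)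

theory Defs
  imports "HOL-Probability.Probability"
begin

definition regr :: "'a measure \<Rightarrow> ('a \<Rightarrow> 'b) \<Rightarrow> 'b measure \<Rightarrow> ('a \<Rightarrow> real) \<Rightarrow> ('b \<Rightarrow> real) \<Rightarrow> bool" where
  "regr M X N Z f \<longleftrightarrow> f \<in> borel_measurable N \<and>
     (AE \<omega> in M. f (X \<omega>) = real_cond_exp M (vimage_algebra (space M) X N) Z \<omega>)"

end

theory Submission
  imports Defs
begin


lemma regr_test:
  fixes Z :: "'a \<Rightarrow> real" and \<phi> :: "'b \<Rightarrow> real"
  assumes fm: "finite_measure M" and X[measurable]: "X \<in> measurable M N" and r: "regr M X N Z f"
    and Z[measurable]: "Z \<in> borel_measurable M" and Zb: "\<forall>\<omega>\<in>space M. \<bar>Z \<omega>\<bar> \<le> C"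
    and phi[measurable]: "\<phi> \<in> borel_measurable N" and phib: "\<forall>x\<in>space N. \<bar>\<phi> x\<bar> \<le> B"
  shows "integrable M (\<lambda>\<omega>. f (X \<omega>) * \<phi> (X \<omega>))"
    "integral\<^sup>L M (\<lambda>\<omega>. Z \<omega> * \<phi> (X \<omega>)) = integral\<^sup>L M (\<lambda>\<omega>. f (X \<omega>) * \<phi> (X \<omega>))"
proof -
  interpret finite_measure M by (rule fm)
  define F where "F = vimage_algebra (space M) X N"
  have sub: "subalgebra M F" unfolding subalgebra_def F_def
    using sets_image_in_sets[of M "space M" X N] X by auto
  interpret fms: finite_measure_subalgebra M F
    by unfold_locales (rule sub)
  have Xs: "X \<in> space M \<rightarrow> space N" using measurable_space[OF X] by auto
  have phiF: "(\<lambda>\<omega>. \<phi> (X \<omega>)) \<in> borel_measurable F"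
    unfolding F_def using measurable_compose[OF measurable_vimage_algebra1[OF Xs] phi] .
  have f[measurable]: "f \<in> borel_measurable N" and ae: "AE \<omega> in M. f (X \<omega>) = real_cond_exp M F Z \<omega>"
    using r unfolding regr_def F_def by auto
  have bnd: "\<bar>\<phi> (X \<omega>) * Z \<omega>\<bar> \<le> \<bar>B\<bar> * \<bar>C\<bar>" if "\<omega> \<in> space M" for \<omega>
  proof -
    have "X \<omega> \<in> space N" using Xs that by blast
    then have "\<bar>\<phi> (X \<omega>)\<bar> \<le> \<bar>B\<bar>" using phib by fastforce
    moreover have "\<bar>Z \<omega>\<bar> \<le> \<bar>C\<bar>" using Zb that by fastforce
    ultimately show ?thesis by (simp add: abs_mult mult_mono)
  qed
  have prodI: "integrable M (\<lambda>\<omega>. \<phi> (X \<omega>) * Z \<omega>)"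
    by (rule integrable_const_bound[where B="\<bar>B\<bar> * \<bar>C\<bar>"]) (use bnd in auto)
  note I = fms.real_cond_exp_intg[OF prodI phiF Z]
  have ae2: "AE \<omega> in M. f (X \<omega>) * \<phi> (X \<omega>) = \<phi> (X \<omega>) * real_cond_exp M F Z \<omega>"
    using ae by eventually_elim simp
  show "integrable M (\<lambda>\<omega>. f (X \<omega>) * \<phi> (X \<omega>))"
    by (rule integrable_cong_AE_imp[OF I(1)]) (use ae2 in auto)
  have "integral\<^sup>L M (\<lambda>\<omega>. f (X \<omega>) * \<phi> (X \<omega>)) = integral\<^sup>L M (\<lambda>\<omega>. \<phi> (X \<omega>) * real_cond_exp M F Z \<omega>)"
    by (rule integral_cong_AE) (use ae2 in auto)
  also have "\<dots> = integral\<^sup>L M (\<lambda>\<omega>. Z \<omega> * \<phi> (X \<omega>))" using I(2) by (simp add: mult.commute)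
  finally show "integral\<^sup>L M (\<lambda>\<omega>. Z \<omega> * \<phi> (X \<omega>)) = integral\<^sup>L M (\<lambda>\<omega>. f (X \<omega>) * \<phi> (X \<omega>))" by simp
qed

lemma regr_bounds:
  fixes Z :: "'a \<Rightarrow> real"
  assumes fm: "finite_measure M" and X[measurable]: "X \<in> measurable M N" and r: "regr M X N Z f"
    and Z[measurable]: "Z \<in> borel_measurable M" and Zb: "\<forall>\<omega>\<in>space M. a \<le> Z \<omega> \<and> Z \<omega> \<le> b"
  shows "AE \<omega> in M. a \<le> f (X \<omega>) \<and> f (X \<omega>) \<le> b"
proof -
  interpret finite_measure M by (rule fm)
  define F where "F = vimage_algebra (space M) X N"
  have sub: "subalgebra M F" unfolding subalgebra_def F_def
    using sets_image_in_sets[of M "space M" X N] X by auto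
  interpret fms: finite_measure_subalgebra M F
    by unfold_locales (rule sub)
  have ae: "AE \<omega> in M. f (X \<omega>) = real_cond_exp M F Z \<omega>"
    using r unfolding regr_def F_def by auto
  have ZI: "integrable M Z"
    by (rule integrable_const_bound[where B="\<bar>a\<bar> + \<bar>b\<bar>"]) (use Zb in force)+
  have "AE \<omega> in M. a \<le> real_cond_exp M F Z \<omega>"
    by (rule fms.real_cond_exp_ge_c[OF ZI]) (use Zb in auto)
  moreover have "AE \<omega> in M. real_cond_exp M F Z \<omega> \<le> b"
    by (rule fms.real_cond_exp_le_c[OF ZI]) (use Zb in auto)
  ultimately show ?thesis using ae by eventually_elim simp
qed


lemma restr_basics:
  fixes A :: "'a \<Rightarrow> real"
  assumes P: "prob_space M" and A_meas[measurable]: "A \<in> borel_measurable M"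
  shows "{\<omega>\<in>space M. A \<omega> = 1} \<in> sets M"
    "finite_measure (restrict_space M {\<omega>\<in>space M. A \<omega> = 1})"
    "space (restrict_space M {\<omega>\<in>space M. A \<omega> = 1}) = {\<omega>\<in>space M. A \<omega> = 1}"
proof -
  have "A -` {1} \<inter> space M \<in> sets M" by (rule measurable_sets[OF A_meas]) simp
  moreover have "{\<omega>\<in>space M. A \<omega> = 1} = A -` {1} \<inter> space M" by blast
  ultimately show S: "{\<omega>\<in>space M. A \<omega> = 1} \<in> sets M" by simp
  show "finite_measure (restrict_space M {\<omega>\<in>space M. A \<omega> = 1})"
    by (rule finite_measure_restrict_space[OF _ S]) (use P in \<open>simp add: prob_space_def\<close>)
  show "space (restrict_space M {\<omega>\<in>space M. A \<omega> = 1}) = {\<omega>\<in>space M. A \<omega> = 1}"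
    by (auto simp: space_restrict_space)
qed

lemma regr_test_restr:
  fixes Z :: "'a \<Rightarrow> real" and \<phi> :: "'b \<Rightarrow> real"
  assumes P: "prob_space M" and A_meas[measurable]: "A \<in> borel_measurable M"
    and A_vals: "\<forall>\<omega>\<in>space M. A \<omega> \<in> {0, 1}"
    and X[measurable]: "X \<in> measurable M N"
    and r: "regr (restrict_space M {\<omega>\<in>space M. A \<omega> = 1}) X N Z f"
    and Z[measurable]: "Z \<in> borel_measurable M" and Zb: "\<forall>\<omega>\<in>space M. \<bar>Z \<omega>\<bar> \<le> C"
    and phi[measurable]: "\<phi> \<in> borel_measurable N" and phib: "\<forall>x\<in>space N. \<bar>\<phi> x\<bar> \<le> B"
  shows "integrable M (\<lambda>\<omega>. A \<omega> * (f (X \<omega>) * \<phi> (X \<omega>)))"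
    "integral\<^sup>L M (\<lambda>\<omega>. A \<omega> * (Z \<omega> * \<phi> (X \<omega>))) = integral\<^sup>L M (\<lambda>\<omega>. A \<omega> * (f (X \<omega>) * \<phi> (X \<omega>)))"
proof -
  let ?S = "{\<omega>\<in>space M. A \<omega> = 1}"
  note rb = restr_basics[OF P A_meas]
  have S': "?S \<inter> space M \<in> sets M" using rb(1) by (simp add: Int_absorb2)
  have X': "X \<in> measurable (restrict_space M ?S) N" by (rule measurable_restrict_space1[OF X])
  have Z': "Z \<in> borel_measurable (restrict_space M ?S)" by (rule measurable_restrict_space1[OF Z])
  have Zb': "\<forall>\<omega>\<in>space (restrict_space M ?S). \<bar>Z \<omega>\<bar> \<le> C" using Zb rb(3) by auto
  note T = regr_test[OF rb(2) X' r Z' Zb' phi phib]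
  have ind: "\<And>\<omega>. \<omega> \<in> space M \<Longrightarrow> indicator ?S \<omega> = A \<omega>"
    using A_vals by (auto simp: indicator_def)
  show "integrable M (\<lambda>\<omega>. A \<omega> * (f (X \<omega>) * \<phi> (X \<omega>)))"
  proof -
    have "integrable M (\<lambda>x. indicator ?S x *\<^sub>R (f (X x) * \<phi> (X x))) = integrable M (\<lambda>\<omega>. A \<omega> * (f (X \<omega>) * \<phi> (X \<omega>)))"
      by (rule Bochner_Integration.integrable_cong[OF refl]) (simp add: ind)
    then show ?thesis using T(1) unfolding integrable_restrict_space[OF S'] by simp
  qed
  have "integral\<^sup>L M (\<lambda>\<omega>. A \<omega> * (Z \<omega> * \<phi> (X \<omega>))) = integral\<^sup>L (restrict_space M ?S) (\<lambda>\<omega>. Z \<omega> * \<phi> (X \<omega>))"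
    unfolding integral_restrict_space[OF S'] by (rule Bochner_Integration.integral_cong[OF refl]) (simp add: ind)
  also have "\<dots> = integral\<^sup>L (restrict_space M ?S) (\<lambda>\<omega>. f (X \<omega>) * \<phi> (X \<omega>))" by (rule T(2))
  also have "\<dots> = integral\<^sup>L M (\<lambda>\<omega>. A \<omega> * (f (X \<omega>) * \<phi> (X \<omega>)))"
    unfolding integral_restrict_space[OF S'] by (rule Bochner_Integration.integral_cong[OF refl]) (simp add: ind)
  finally show "integral\<^sup>L M (\<lambda>\<omega>. A \<omega> * (Z \<omega> * \<phi> (X \<omega>))) = integral\<^sup>L M (\<lambda>\<omega>. A \<omega> * (f (X \<omega>) * \<phi> (X \<omega>)))" .
qed

lemma regr_bounds_restr:
  fixes Z A :: "'a \<Rightarrow> real"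
  assumes P: "prob_space M" and A_meas[measurable]: "A \<in> borel_measurable M"
    and X[measurable]: "X \<in> measurable M N"
    and r: "regr (restrict_space M {\<omega>\<in>space M. A \<omega> = 1}) X N Z f"
    and Z[measurable]: "Z \<in> borel_measurable M" and Zb: "\<forall>\<omega>\<in>space M. a \<le> Z \<omega> \<and> Z \<omega> \<le> b"
  shows "AE \<omega> in M. A \<omega> = 1 \<longrightarrow> a \<le> f (X \<omega>) \<and> f (X \<omega>) \<le> b"
proof -
  let ?S = "{\<omega>\<in>space M. A \<omega> = 1}"
  note rb = restr_basics[OF P A_meas]
  have S': "?S \<inter> space M \<in> sets M" using rb(1) by (simp add: Int_absorb2)
  have X': "X \<in> measurable (restrict_space M ?S) N" by (rule measurable_restrict_space1[OF X])
  have Z': "Z \<in> borel_measurable (restrict_space M ?S)" by (rule measurable_restrict_space1[OF Z])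
  have Zb': "\<forall>\<omega>\<in>space (restrict_space M ?S). a \<le> Z \<omega> \<and> Z \<omega> \<le> b" using Zb rb(3) by auto
  have "AE \<omega> in restrict_space M ?S. a \<le> f (X \<omega>) \<and> f (X \<omega>) \<le> b"
    by (rule regr_bounds[OF rb(2) X' r Z' Zb'])
  then have "AE \<omega> in M. \<omega> \<in> ?S \<longrightarrow> a \<le> f (X \<omega>) \<and> f (X \<omega>) \<le> b"
    unfolding AE_restrict_space_iff[OF S'] .
  then show ?thesis using AE_space by eventually_elim auto
qed


lemma abs_mult_le: "\<bar>x::real\<bar> \<le> a \<Longrightarrow> \<bar>y\<bar> \<le> b \<Longrightarrow> \<bar>x * y\<bar> \<le> a * b"
  by (simp add: abs_mult mult_mono')

lemma abs_mult_le1: "\<bar>x::real\<bar> \<le> 1 \<Longrightarrow> \<bar>y\<bar> \<le> b \<Longrightarrow> \<bar>x * y\<bar> \<le> b"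
  using abs_mult_le[of x 1 y b] by simp

lemma inv_max_bnd: "(e::real) > 0 \<Longrightarrow> 0 < 1 / max e x \<and> 1 / max e x \<le> 1 / e"
  by (auto simp: frac_le max_def)

lemma bounded_integrable:
  fixes f :: "'a \<Rightarrow> real"
  assumes "finite_measure M" "f \<in> borel_measurable M" "\<And>\<omega>. \<omega> \<in> space M \<Longrightarrow> \<bar>f \<omega>\<bar> \<le> B"
  shows "integrable M f"
proof -
  interpret finite_measure M by fact
  show ?thesis by (rule integrable_const_bound[where B=B]) (use assms in auto)
qed



theorem theorem2:
  fixes M :: "'o measure" and Mw :: "'w measure"
    and W :: "'o \<Rightarrow> 'w" and A Y :: "'o \<Rightarrow> real"
    and g m g1 m1 :: "'w \<Rightarrow> real" and h k :: "real \<Rightarrow> real"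
    and \<epsilon> \<epsilon>1 \<theta> :: real
  assumes P: "prob_space M"
    and W_meas: "W \<in> measurable M Mw"
    and A_meas: "A \<in> borel_measurable M" and A_vals: "\<forall>\<omega>\<in>space M. A \<omega> \<in> {0, 1}"
    and Y_meas: "Y \<in> borel_measurable M" and Y_vals: "\<forall>\<omega>\<in>space M. 0 \<le> Y \<omega> \<and> Y \<omega> \<le> 1"
    \<comment> \<open>propensity score g(w) = P(A=1 | W=w)\<close>
    and g_def: "regr M W Mw A g"
    \<comment> \<open>outcome regression m(w) = E(Y | A=1, W=w)\<close>
    and m_def: "regr (restrict_space M {\<omega>\<in>space M. A \<omega> = 1}) W Mw Y m"
    and theta_def: "\<theta> = integral\<^sup>L M (\<lambda>\<omega>. m (W \<omega>))"
    \<comment> \<open>strong positivity\<close>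
    and eps_pos: "\<epsilon> > 0" and positivity: "AE \<omega> in M. g (W \<omega>) > \<epsilon>"
    and g1_meas: "g1 \<in> borel_measurable Mw"
    and eps1_pos: "\<epsilon>1 > 0" and g1_vals: "\<forall>w\<in>space Mw. \<epsilon>1 \<le> g1 w \<and> g1 w \<le> 1"
    and m1_meas: "m1 \<in> borel_measurable Mw"
    and m1_vals: "\<forall>w\<in>space Mw. 0 \<le> m1 w \<and> m1 w \<le> 1"
    and dr: "(AE \<omega> in M. g1 (W \<omega>) = g (W \<omega>)) \<or> (AE \<omega> in M. m1 (W \<omega>) = m (W \<omega>))"
    \<comment> \<open>r1(w) = h(g1(w)) with h(t) = E(Y - m1(W) | A=1, g1(W)=t)\<close>
    and h_def: "regr (restrict_space M {\<omega>\<in>space M. A \<omega> = 1}) (\<lambda>\<omega>. g1 (W \<omega>)) borel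
                  (\<lambda>\<omega>. Y \<omega> - m1 (W \<omega>)) h"
    \<comment> \<open>e1(w) = k(r1(w)) with k(s) = E(g1(W) | r1(W)=s)\<close>
    and k_def: "regr M (\<lambda>\<omega>. h (g1 (W \<omega>))) borel (\<lambda>\<omega>. g1 (W \<omega>)) k"
  shows "integrable M (\<lambda>\<omega>. A \<omega> / k (h (g1 (W \<omega>))) * (Y \<omega> - m1 (W \<omega>)) + m1 (W \<omega>) - \<theta>)
     \<and> integral\<^sup>L M (\<lambda>\<omega>. A \<omega> / k (h (g1 (W \<omega>))) * (Y \<omega> - m1 (W \<omega>)) + m1 (W \<omega>) - \<theta>) = 0"
proof -
  interpret prob_space M by (rule P)
  have fm: "finite_measure M" using P by (simp add: prob_space_def)
  note [measurable] = W_meas A_meas Y_meas g1_meas m1_meas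
  have g_meas[measurable]: "g \<in> borel_measurable Mw" using g_def unfolding regr_def by blast
  have m_meas[measurable]: "m \<in> borel_measurable Mw" using m_def unfolding regr_def by blast
  have h_meas[measurable]: "h \<in> borel_measurable borel" using h_def unfolding regr_def by blast
  have k_meas[measurable]: "k \<in> borel_measurable borel" using k_def unfolding regr_def by blast
  have Wsp: "\<And>\<omega>. \<omega> \<in> space M \<Longrightarrow> W \<omega> \<in> space Mw" using measurable_space[OF W_meas] by blast
  have g1X[measurable]: "(\<lambda>\<omega>. g1 (W \<omega>)) \<in> borel_measurable M" by measurable
  have rX[measurable]: "(\<lambda>\<omega>. h (g1 (W \<omega>))) \<in> borel_measurable M" by measurable
  have g1b: "\<And>\<omega>. \<omega> \<in> space M \<Longrightarrow> \<epsilon>1 \<le> g1 (W \<omega>) \<and> g1 (W \<omega>) \<le> 1" using g1_vals Wsp by blast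
  have m1b: "\<And>\<omega>. \<omega> \<in> space M \<Longrightarrow> 0 \<le> m1 (W \<omega>) \<and> m1 (W \<omega>) \<le> 1" using m1_vals Wsp by blast
  have Ab: "\<And>\<omega>. \<omega> \<in> space M \<Longrightarrow> A \<omega> = 0 \<or> A \<omega> = 1" using A_vals by auto
  have Yb: "\<And>\<omega>. \<omega> \<in> space M \<Longrightarrow> 0 \<le> Y \<omega> \<and> Y \<omega> \<le> 1" using Y_vals by auto

  have F1: "AE \<omega> in M. \<epsilon>1 \<le> k (h (g1 (W \<omega>))) \<and> k (h (g1 (W \<omega>))) \<le> 1"
    by (rule regr_bounds[OF fm rX k_def g1X]) (use g1b in auto)
  have F2: "AE \<omega> in M. A \<omega> = 1 \<longrightarrow> -1 \<le> h (g1 (W \<omega>)) \<and> h (g1 (W \<omega>)) \<le> 1"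
    by (rule regr_bounds_restr[OF P A_meas g1X h_def]) (measurable, use Yb m1b in \<open>smt (verit)\<close>)
  have F3: "AE \<omega> in M. A \<omega> = 1 \<longrightarrow> 0 \<le> m (W \<omega>) \<and> m (W \<omega>) \<le> 1"
    by (rule regr_bounds_restr[OF P A_meas W_meas m_def Y_meas]) (use Yb in auto)

  define \<psi> where "\<psi> = (\<lambda>t. 1 / max \<epsilon>1 (k (h t)))"
  define \<rho> where "\<rho> = (\<lambda>t::real. 1 / max \<epsilon>1 t)"
  have psi_meas[measurable]: "\<psi> \<in> borel_measurable borel" unfolding \<psi>_def by measurable
  have rho_meas[measurable]: "\<rho> \<in> borel_measurable borel" unfolding \<rho>_def by measurable
  have psib: "\<And>t. \<bar>\<psi> t\<bar> \<le> 1/\<epsilon>1" unfolding \<psi>_def using inv_max_bnd[OF eps1_pos] by (metis abs_of_pos)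
  have rhob: "\<And>t. \<bar>\<rho> t\<bar> \<le> 1/\<epsilon>1" unfolding \<rho>_def using inv_max_bnd[OF eps1_pos] by (metis abs_of_pos)
  define T where "T = integral\<^sup>L M (\<lambda>\<omega>. A \<omega> * ((Y \<omega> - m1 (W \<omega>)) * \<psi> (g1 (W \<omega>))))"
  have Tb: "\<bar>A \<omega> * ((Y \<omega> - m1 (W \<omega>)) * \<psi> (g1 (W \<omega>)))\<bar> \<le> 1 * (1 * (1/\<epsilon>1))" if "\<omega> \<in> space M" for \<omega>
    using Ab[OF that] Yb[OF that] m1b[OF that]
    by (intro abs_mult_le psib) auto
  have TI: "integrable M (\<lambda>\<omega>. A \<omega> * ((Y \<omega> - m1 (W \<omega>)) * \<psi> (g1 (W \<omega>))))"
    by (rule bounded_integrable[OF fm _ Tb]) measurable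
  have m1I: "integrable M (\<lambda>\<omega>. m1 (W \<omega>))"
    by (rule bounded_integrable[OF fm _, where B=1]) (use m1b in auto)
  define D' where "D' = (\<lambda>\<omega>. A \<omega> * ((Y \<omega> - m1 (W \<omega>)) * \<psi> (g1 (W \<omega>))) + m1 (W \<omega>) - \<theta>)"
  have D'I: "integrable M D'" unfolding D'_def using TI m1I by auto
  have D'int: "integral\<^sup>L M D' = T + integral\<^sup>L M (\<lambda>\<omega>. m1 (W \<omega>)) - \<theta>"
    unfolding D'_def T_def using TI m1I by (simp add: prob_space)
  have DD': "AE \<omega> in M. A \<omega> / k (h (g1 (W \<omega>))) * (Y \<omega> - m1 (W \<omega>)) + m1 (W \<omega>) - \<theta> = D' \<omega>"
    using F1 proof eventually_elim
    case (elim \<omega>)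
    then have "max \<epsilon>1 (k (h (g1 (W \<omega>)))) = k (h (g1 (W \<omega>)))" by auto
    then show ?case unfolding D'_def \<psi>_def by simp
  qed

  have Yab: "\<forall>\<omega>\<in>space M. \<bar>Y \<omega>\<bar> \<le> 1" using Yb by auto
  have psig1b: "\<forall>x\<in>space Mw. \<bar>\<psi> (g1 x)\<bar> \<le> 1/\<epsilon>1" using psib by auto
  have psig1m: "(\<lambda>w. \<psi> (g1 w)) \<in> borel_measurable Mw" by measurable
  have key: "T + integral\<^sup>L M (\<lambda>\<omega>. m1 (W \<omega>)) - \<theta> = 0"
    using dr
  proof
    assume mm: "AE \<omega> in M. m1 (W \<omega>) = m (W \<omega>)"
    note t1 = regr_test_restr[OF P A_meas A_vals W_meas m_def Y_meas Yab psig1m psig1b]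
    have I1: "integrable M (\<lambda>\<omega>. A \<omega> * (Y \<omega> * \<psi> (g1 (W \<omega>))))"
      by (rule bounded_integrable[OF fm, where B="1 * (1 * (1/\<epsilon>1))"], measurable)
         (use Ab Yb psib in \<open>intro abs_mult_le; force\<close>)
    have I2: "integrable M (\<lambda>\<omega>. A \<omega> * (m1 (W \<omega>) * \<psi> (g1 (W \<omega>))))"
      by (rule bounded_integrable[OF fm, where B="1 * (1 * (1/\<epsilon>1))"], measurable)
         (use Ab m1b psib in \<open>intro abs_mult_le; force\<close>)
    have "T = integral\<^sup>L M (\<lambda>\<omega>. A \<omega> * (Y \<omega> * \<psi> (g1 (W \<omega>))) - A \<omega> * (m1 (W \<omega>) * \<psi> (g1 (W \<omega>))))"
      unfolding T_def by (rule Bochner_Integration.integral_cong[OF refl]) (simp add: algebra_simps)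
    also have "\<dots> = integral\<^sup>L M (\<lambda>\<omega>. A \<omega> * (Y \<omega> * \<psi> (g1 (W \<omega>)))) - integral\<^sup>L M (\<lambda>\<omega>. A \<omega> * (m1 (W \<omega>) * \<psi> (g1 (W \<omega>))))"
      using I1 I2 by simp
    also have "integral\<^sup>L M (\<lambda>\<omega>. A \<omega> * (m1 (W \<omega>) * \<psi> (g1 (W \<omega>)))) = integral\<^sup>L M (\<lambda>\<omega>. A \<omega> * (m (W \<omega>) * \<psi> (g1 (W \<omega>))))"
      by (rule integral_cong_AE) (use mm in auto)
    finally have "T = 0" using t1(2) by simp
    moreover have "integral\<^sup>L M (\<lambda>\<omega>. m1 (W \<omega>)) = \<theta>"
      unfolding theta_def by (rule integral_cong_AE) (use mm in auto)
    ultimately show ?thesis by simp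
  next
    assume gg: "AE \<omega> in M. g1 (W \<omega>) = g (W \<omega>)"
    define c where "c = (\<lambda>t::real. max (-1) (min 1 t))"
    define m' where "m' = (\<lambda>w. max 0 (min 1 (m w)))"
    define chi where "chi = (\<lambda>s. c s * (1 / max \<epsilon>1 (k s)))"
    have c_meas[measurable]: "c \<in> borel_measurable borel" unfolding c_def by measurable
    have m'_meas[measurable]: "m' \<in> borel_measurable Mw" unfolding m'_def by measurable
    have chi_meas[measurable]: "chi \<in> borel_measurable borel" unfolding chi_def by measurable
    have cb: "\<And>t. \<bar>c t\<bar> \<le> 1" unfolding c_def by auto
    have m'b: "\<And>w. \<bar>m' w\<bar> \<le> 1" unfolding m'_def by auto
    have Aab: "\<forall>\<omega>\<in>space M. \<bar>A \<omega>\<bar> \<le> 1" using Ab by force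
    have Zm[measurable]: "(\<lambda>\<omega>. Y \<omega> - m1 (W \<omega>)) \<in> borel_measurable M" by measurable
    have Zb: "\<forall>\<omega>\<in>space M. \<bar>Y \<omega> - m1 (W \<omega>)\<bar> \<le> 1" using Yb m1b by fastforce
    have psib': "\<forall>x\<in>space borel. \<bar>\<psi> x\<bar> \<le> 1/\<epsilon>1" using psib by auto
    have rhob': "\<forall>x\<in>space borel. \<bar>\<rho> x\<bar> \<le> 1/\<epsilon>1" using rhob by auto
    have g1ab: "\<forall>\<omega>\<in>space M. \<bar>g1 (W \<omega>)\<bar> \<le> 1" using g1b eps1_pos by fastforce

    note ta = regr_test_restr[OF P A_meas A_vals g1X h_def Zm Zb psi_meas psib']
    have a2: "integral\<^sup>L M (\<lambda>\<omega>. A \<omega> * (h (g1 (W \<omega>)) * \<psi> (g1 (W \<omega>))))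
        = integral\<^sup>L M (\<lambda>\<omega>. A \<omega> * (c (h (g1 (W \<omega>))) * \<psi> (g1 (W \<omega>))))"
    proof (rule integral_cong_AE)
      show "AE \<omega> in M. A \<omega> * (h (g1 (W \<omega>)) * \<psi> (g1 (W \<omega>))) = A \<omega> * (c (h (g1 (W \<omega>))) * \<psi> (g1 (W \<omega>)))"
        using F2 AE_space proof eventually_elim
        case (elim \<omega>) then show ?case using Ab[of \<omega>] by (auto simp: c_def)
      qed
    qed measurable
    have phib_m: "(\<lambda>w. c (h (g1 w)) * \<psi> (g1 w)) \<in> borel_measurable Mw" by measurable
    have phib_b: "\<forall>x\<in>space Mw. \<bar>c (h (g1 x)) * \<psi> (g1 x)\<bar> \<le> 1/\<epsilon>1"
      using cb psib by (auto intro!: abs_mult_le1)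
    note tb = regr_test[OF fm W_meas g_def A_meas Aab phib_m phib_b]
    have b2: "integral\<^sup>L M (\<lambda>\<omega>. g (W \<omega>) * (c (h (g1 (W \<omega>))) * \<psi> (g1 (W \<omega>))))
        = integral\<^sup>L M (\<lambda>\<omega>. g1 (W \<omega>) * chi (h (g1 (W \<omega>))))"
    proof (rule integral_cong_AE)
      show "AE \<omega> in M. g (W \<omega>) * (c (h (g1 (W \<omega>))) * \<psi> (g1 (W \<omega>))) = g1 (W \<omega>) * chi (h (g1 (W \<omega>)))"
        using gg by eventually_elim (simp add: chi_def \<psi>_def)
    qed measurable
    have chib: "\<forall>x\<in>space borel. \<bar>chi x\<bar> \<le> 1/\<epsilon>1"
    proof
      fix x :: real
      have "\<bar>1 / max \<epsilon>1 (k x)\<bar> \<le> 1/\<epsilon>1" using inv_max_bnd[OF eps1_pos, of "k x"] by (metis abs_of_pos)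
      then show "\<bar>chi x\<bar> \<le> 1/\<epsilon>1" unfolding chi_def by (rule abs_mult_le1[OF cb])
    qed
    note tc = regr_test[OF fm rX k_def g1X g1ab chi_meas chib]
    have c2: "integral\<^sup>L M (\<lambda>\<omega>. k (h (g1 (W \<omega>))) * chi (h (g1 (W \<omega>))))
        = integral\<^sup>L M (\<lambda>\<omega>. c (h (g1 (W \<omega>))))"
    proof (rule integral_cong_AE)
      show "AE \<omega> in M. k (h (g1 (W \<omega>))) * chi (h (g1 (W \<omega>))) = c (h (g1 (W \<omega>)))"
        using F1 proof eventually_elim
        case (elim \<omega>)
        then have "max \<epsilon>1 (k (h (g1 (W \<omega>)))) = k (h (g1 (W \<omega>)))" "k (h (g1 (W \<omega>))) \<noteq> 0"
          using eps1_pos by auto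
        then show ?case by (simp add: chi_def)
      qed
    qed measurable
    have Tc: "T = integral\<^sup>L M (\<lambda>\<omega>. c (h (g1 (W \<omega>))))"
      using ta(2) a2 tb(2) b2 tc(2) c2 unfolding T_def by simp
    have g1rho: "\<And>\<omega>. \<omega> \<in> space M \<Longrightarrow> g1 (W \<omega>) * \<rho> (g1 (W \<omega>)) = 1"
    proof -
      fix \<omega> assume "\<omega> \<in> space M"
      then have "max \<epsilon>1 (g1 (W \<omega>)) = g1 (W \<omega>)" "g1 (W \<omega>) \<noteq> 0" using g1b eps1_pos by force+
      then show "g1 (W \<omega>) * \<rho> (g1 (W \<omega>)) = 1" by (simp add: \<rho>_def)
    qed
    have d1: "integral\<^sup>L M (\<lambda>\<omega>. c (h (g1 (W \<omega>))))
        = integral\<^sup>L M (\<lambda>\<omega>. g (W \<omega>) * (c (h (g1 (W \<omega>))) * \<rho> (g1 (W \<omega>))))"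
    proof (rule integral_cong_AE)
      show "AE \<omega> in M. c (h (g1 (W \<omega>))) = g (W \<omega>) * (c (h (g1 (W \<omega>))) * \<rho> (g1 (W \<omega>)))"
        using gg AE_space proof eventually_elim
        case (elim \<omega>)
        then have "g (W \<omega>) * (c (h (g1 (W \<omega>))) * \<rho> (g1 (W \<omega>))) = c (h (g1 (W \<omega>))) * (g1 (W \<omega>) * \<rho> (g1 (W \<omega>)))"
          by simp
        then show ?case using g1rho[OF elim(2)] by simp
      qed
    qed measurable
    have phid_m: "(\<lambda>w. c (h (g1 w)) * \<rho> (g1 w)) \<in> borel_measurable Mw" by measurable
    have phid_b: "\<forall>x\<in>space Mw. \<bar>c (h (g1 x)) * \<rho> (g1 x)\<bar> \<le> 1/\<epsilon>1"
      using cb rhob by (auto intro!: abs_mult_le1)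
    note td = regr_test[OF fm W_meas g_def A_meas Aab phid_m phid_b]
    have d2: "integral\<^sup>L M (\<lambda>\<omega>. A \<omega> * (c (h (g1 (W \<omega>))) * \<rho> (g1 (W \<omega>))))
        = integral\<^sup>L M (\<lambda>\<omega>. A \<omega> * (h (g1 (W \<omega>)) * \<rho> (g1 (W \<omega>))))"
    proof (rule integral_cong_AE)
      show "AE \<omega> in M. A \<omega> * (c (h (g1 (W \<omega>))) * \<rho> (g1 (W \<omega>))) = A \<omega> * (h (g1 (W \<omega>)) * \<rho> (g1 (W \<omega>)))"
        using F2 AE_space proof eventually_elim
        case (elim \<omega>) then show ?case using Ab[of \<omega>] by (auto simp: c_def)
      qed
    qed measurable
    note te = regr_test_restr[OF P A_meas A_vals g1X h_def Zm Zb rho_meas rhob']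
    have IY: "integrable M (\<lambda>\<omega>. A \<omega> * (Y \<omega> * \<rho> (g1 (W \<omega>))))"
      by (rule bounded_integrable[OF fm, where B="1 * (1 * (1/\<epsilon>1))"], measurable)
         (use Ab Yb rhob in \<open>intro abs_mult_le; force\<close>)
    have Im1: "integrable M (\<lambda>\<omega>. A \<omega> * (m1 (W \<omega>) * \<rho> (g1 (W \<omega>))))"
      by (rule bounded_integrable[OF fm, where B="1 * (1 * (1/\<epsilon>1))"], measurable)
         (use Ab m1b rhob in \<open>intro abs_mult_le; force\<close>)
    have d3: "integral\<^sup>L M (\<lambda>\<omega>. A \<omega> * ((Y \<omega> - m1 (W \<omega>)) * \<rho> (g1 (W \<omega>))))
       = integral\<^sup>L M (\<lambda>\<omega>. A \<omega> * (Y \<omega> * \<rho> (g1 (W \<omega>)))) - integral\<^sup>L M (\<lambda>\<omega>. A \<omega> * (m1 (W \<omega>) * \<rho> (g1 (W \<omega>))))"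
    proof -
      have "integral\<^sup>L M (\<lambda>\<omega>. A \<omega> * ((Y \<omega> - m1 (W \<omega>)) * \<rho> (g1 (W \<omega>))))
         = integral\<^sup>L M (\<lambda>\<omega>. A \<omega> * (Y \<omega> * \<rho> (g1 (W \<omega>))) - A \<omega> * (m1 (W \<omega>) * \<rho> (g1 (W \<omega>))))"
        by (rule Bochner_Integration.integral_cong[OF refl]) (simp add: algebra_simps)
      then show ?thesis using IY Im1 by simp
    qed
    have rhog1m: "(\<lambda>w. \<rho> (g1 w)) \<in> borel_measurable Mw" by measurable
    have rhog1b: "\<forall>x\<in>space Mw. \<bar>\<rho> (g1 x)\<bar> \<le> 1/\<epsilon>1" using rhob by auto
    note tf = regr_test_restr[OF P A_meas A_vals W_meas m_def Y_meas Yab rhog1m rhog1b]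
    have d4: "integral\<^sup>L M (\<lambda>\<omega>. A \<omega> * (m (W \<omega>) * \<rho> (g1 (W \<omega>))))
        = integral\<^sup>L M (\<lambda>\<omega>. A \<omega> * (m' (W \<omega>) * \<rho> (g1 (W \<omega>))))"
    proof (rule integral_cong_AE)
      show "AE \<omega> in M. A \<omega> * (m (W \<omega>) * \<rho> (g1 (W \<omega>))) = A \<omega> * (m' (W \<omega>) * \<rho> (g1 (W \<omega>)))"
        using F3 AE_space proof eventually_elim
        case (elim \<omega>) then show ?case using Ab[of \<omega>] by (auto simp: m'_def)
      qed
    qed measurable
    have phig_m: "(\<lambda>w. m' w * \<rho> (g1 w)) \<in> borel_measurable Mw" by measurable
    have phig_b: "\<forall>x\<in>space Mw. \<bar>m' x * \<rho> (g1 x)\<bar> \<le> 1/\<epsilon>1"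
      using m'b rhob by (auto intro!: abs_mult_le1)
    note tg = regr_test[OF fm W_meas g_def A_meas Aab phig_m phig_b]
    have d5: "integral\<^sup>L M (\<lambda>\<omega>. g (W \<omega>) * (m' (W \<omega>) * \<rho> (g1 (W \<omega>)))) = integral\<^sup>L M (\<lambda>\<omega>. m' (W \<omega>))"
    proof (rule integral_cong_AE)
      show "AE \<omega> in M. g (W \<omega>) * (m' (W \<omega>) * \<rho> (g1 (W \<omega>))) = m' (W \<omega>)"
        using gg AE_space proof eventually_elim
        case (elim \<omega>)
        then have "g (W \<omega>) * (m' (W \<omega>) * \<rho> (g1 (W \<omega>))) = m' (W \<omega>) * (g1 (W \<omega>) * \<rho> (g1 (W \<omega>)))"
          by simp
        then show ?case using g1rho[OF elim(2)] by simp
      qed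
    qed measurable
    have phih_m: "(\<lambda>w. m1 w * \<rho> (g1 w)) \<in> borel_measurable Mw" by measurable
    have phih_b: "\<forall>x\<in>space Mw. \<bar>m1 x * \<rho> (g1 x)\<bar> \<le> 1/\<epsilon>1"
      using m1_vals rhob by (auto intro!: abs_mult_le1)
    note th = regr_test[OF fm W_meas g_def A_meas Aab phih_m phih_b]
    have d6: "integral\<^sup>L M (\<lambda>\<omega>. g (W \<omega>) * (m1 (W \<omega>) * \<rho> (g1 (W \<omega>)))) = integral\<^sup>L M (\<lambda>\<omega>. m1 (W \<omega>))"
    proof (rule integral_cong_AE)
      show "AE \<omega> in M. g (W \<omega>) * (m1 (W \<omega>) * \<rho> (g1 (W \<omega>))) = m1 (W \<omega>)"
        using gg AE_space proof eventually_elim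
        case (elim \<omega>)
        then have "g (W \<omega>) * (m1 (W \<omega>) * \<rho> (g1 (W \<omega>))) = m1 (W \<omega>) * (g1 (W \<omega>) * \<rho> (g1 (W \<omega>)))"
          by simp
        then show ?case using g1rho[OF elim(2)] by simp
      qed
    qed measurable
    have Tm: "T = integral\<^sup>L M (\<lambda>\<omega>. m' (W \<omega>)) - integral\<^sup>L M (\<lambda>\<omega>. m1 (W \<omega>))"
      using Tc d1 td(2) d2 te(2) d3 tf(2) d4 tg(2) d5 th(2) d6 by simp
    define B where "B = {w\<in>space Mw. m w \<noteq> m' w}"
    have B_sets[measurable]: "B \<in> sets Mw" unfolding B_def by measurable
    have indm: "(indicator B :: 'w \<Rightarrow> real) \<in> borel_measurable Mw" by measurable
    have indb: "\<forall>x\<in>space Mw. \<bar>indicator B x :: real\<bar> \<le> 1" by (auto simp: indicator_def)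
    note ti = regr_test[OF fm W_meas g_def A_meas Aab indm indb]
    have "integral\<^sup>L M (\<lambda>\<omega>. A \<omega> * indicator B (W \<omega>)) = integral\<^sup>L M (\<lambda>\<omega>. 0::real)"
    proof (rule integral_cong_AE)
      show "AE \<omega> in M. A \<omega> * indicator B (W \<omega>) = (0::real)"
        using F3 AE_space proof eventually_elim
        case (elim \<omega>) then show ?case using Ab[of \<omega>] by (auto simp: m'_def B_def indicator_def)
      qed
    qed measurable
    then have z: "integral\<^sup>L M (\<lambda>\<omega>. g (W \<omega>) * indicator B (W \<omega>)) = 0" using ti(2) by simp
    have nn: "AE \<omega> in M. 0 \<le> g (W \<omega>) * indicator B (W \<omega>)"
      using positivity by eventually_elim (use eps_pos in \<open>auto simp: indicator_def\<close>)
    have "AE \<omega> in M. g (W \<omega>) * indicator B (W \<omega>) = 0"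
      using integral_nonneg_eq_0_iff_AE[OF ti(1) nn] z by simp
    then have mm': "AE \<omega> in M. m (W \<omega>) = m' (W \<omega>)"
      using positivity AE_space proof eventually_elim
      case (elim \<omega>) then show ?case using eps_pos Wsp[of \<omega>] by (auto simp: B_def indicator_def split: if_splits)
    qed
    have "\<theta> = integral\<^sup>L M (\<lambda>\<omega>. m' (W \<omega>))"
      unfolding theta_def by (rule integral_cong_AE) (use mm' in auto)
    then show ?thesis using Tm by simp
  qed
  have DI: "integrable M (\<lambda>\<omega>. A \<omega> / k (h (g1 (W \<omega>))) * (Y \<omega> - m1 (W \<omega>)) + m1 (W \<omega>) - \<theta>)"
    by (rule integrable_cong_AE_imp[OF D'I]) (use DD' in \<open>auto simp: eq_commute\<close>)
  have "integral\<^sup>L M (\<lambda>\<omega>. A \<omega> / k (h (g1 (W \<omega>))) * (Y \<omega> - m1 (W \<omega>)) + m1 (W \<omega>) - \<theta>) = integral\<^sup>L M D'"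
    by (rule integral_cong_AE) (use DD' in \<open>auto simp: D'_def\<close>)
  then show ?thesis using DI D'int key by simp
qed

end
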